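(* Let $d\ge1$ be an integer, let $\mathbf X=(X_1,\dots,X_d)$ be any random vector in $\mathbb R^d$ and let $\mathbf G=(G_1,\dots,G_d)$ be a Gaussian random vector with identity covariance matrix. Then $$d_{\mathrm K}(\mathbf X,\mathbf G)\le 3\log^{1/4}(d+1)\sqrt{W_1(\mathbf X,\mathbf G)}.$$
   Context: The Kolmogorov distance is $d_{\mathrm K}(\mathbf X,\mathbf G)=\sup|\mathbb P[\mathbf X\in Q]-\mathbb P[\mathbf G\in Q]|$, the supremum over all sets $Q=(-\infty,a_1]\times\dots\times(-\infty,a_d]$ with $a_i\in\mathbb R$. The $1$-Wasserstein distance is $W_1(\mathbf X,\mathbf G)=\inf\mathbb E\|\mathbf U-\mathbf V\|$, the infimum over all couplings $(\mathbf U,\mathbf V)$ with $\mathbf U\overset{law}{=}\mathbf X$, $\mathbf V\overset{law}{=}\mathbf G$, where $\|\cdot\|$ is the Euclidean norm (it may equal $+\infty$). *)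

theory Defs
  imports "HOL-Probability.Probability"
begin

definition lower_orthant :: "real^'n \<Rightarrow> (real^'n) set" where
  "lower_orthant a = {x. \<forall>i. x $ i \<le> a $ i}"

definition kolmogorov_dist :: "(real^'n) measure \<Rightarrow> (real^'n) measure \<Rightarrow> real" where
  "kolmogorov_dist P Q =
     (SUP a. \<bar>measure P (lower_orthant a) - measure Q (lower_orthant a)\<bar>)"

definition couplings :: "(real^'n) measure \<Rightarrow> (real^'n) measure \<Rightarrow> ((real^'n) \<times> (real^'n)) measure set" where
  "couplings P Q = {C. prob_space C \<and> sets C = sets borel \<and>
                       distr C borel fst = P \<and> distr C borel snd = Q}"

definition wasserstein1 :: "(real^'n) measure \<Rightarrow> (real^'n) measure \<Rightarrow> ennreal" where
  "wasserstein1 P Q = (INF C \<in> couplings P Q. \<integral>\<^sup>+ z. ennreal (norm (fst z - snd z)) \<partial>C)"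

definition gaussian_id_cov :: "real^'n \<Rightarrow> (real^'n) measure" where
  "gaussian_id_cov mu = density lborel
     (\<lambda>x. ennreal ((2 * pi) powr (- real CARD('n) / 2) * exp (- (norm (x - mu))\<^sup>2 / 2)))"

end

theory Submission
  imports Defs "HOL-Real_Asymp.Real_Asymp"
begin

definition Phi :: "real \<Rightarrow> real" where
  "Phi x = interval_lebesgue_integral lborel (-\<infinity>) (ereal x) std_normal_density"

lemma snd_cont: "continuous_on S std_normal_density"
  unfolding normal_density_def by (intro continuous_intros) auto

lemma snd_integrable_ind: "integrable lborel (\<lambda>y. indicator A y * std_normal_density y)" if "A \<in> sets borel"
  using integrable_mult_indicator[of A lborel std_normal_density] that by simp

lemma Phi_eq: "Phi x = (\<integral>y. indicator {..<x} y *\<^sub>R std_normal_density y \<partial>lborel)"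
proof -
  have "einterval (-\<infinity>) (ereal x) = {..<x}" by (auto simp: einterval_def)
  then show ?thesis unfolding Phi_def interval_lebesgue_integral_def set_lebesgue_integral_def by simp
qed

lemma Phi_nn: "(\<integral>\<^sup>+y. ennreal (std_normal_density y) * indicator {..x} y \<partial>lborel) = ennreal (Phi x)"
proof -
  have "(\<integral>\<^sup>+y. ennreal (std_normal_density y) * indicator {..x} y \<partial>lborel)
      = (\<integral>\<^sup>+y. ennreal (indicator {..<x} y *\<^sub>R std_normal_density y) \<partial>lborel)"
  proof (rule nn_integral_cong_AE)
    show "AE y in lborel. ennreal (std_normal_density y) * indicator {..x} y = ennreal (indicator {..<x} y *\<^sub>R std_normal_density y)"
      using AE_lborel_singleton[of x] by eventually_elim (auto split: split_indicator)
  qed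
  also have "\<dots> = ennreal (\<integral>y. indicator {..<x} y *\<^sub>R std_normal_density y \<partial>lborel)"
    by (rule nn_integral_eq_integral) (auto intro!: snd_integrable_ind)
  finally show ?thesis by (simp add: Phi_eq)
qed

lemma snd_interval_integrable: "interval_lebesgue_integrable lborel a b std_normal_density"
  unfolding interval_lebesgue_integrable_def set_integrable_def
  by (auto intro!: snd_integrable_ind)

lemma Phi_split: "Phi x = Phi 0 + (LBINT y=0..x. std_normal_density y)"
  unfolding Phi_def
  by (subst interval_integral_sum[symmetric, of "-\<infinity>" "ereal 0" "ereal x"])
     (auto simp: snd_interval_integrable zero_ereal_def)

lemma Phi_deriv: "(Phi has_field_derivative std_normal_density x) (at x)"
proof -
  define a where "a = min 0 x - 1"
  define b where "b = max 0 x + 1"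
  have "((\<lambda>u. LBINT y=0..u. std_normal_density y) has_vector_derivative std_normal_density x) (at x within {a..b})"
    using interval_integral_FTC2[of a 0 b std_normal_density x] by (auto simp: a_def b_def snd_cont zero_ereal_def)
  then have "((\<lambda>u. LBINT y=0..u. std_normal_density y) has_vector_derivative std_normal_density x) (at x)"
    by (subst (asm) at_within_Icc_at) (auto simp: a_def b_def)
  then have "((\<lambda>u. Phi 0 + (LBINT y=0..u. std_normal_density y)) has_field_derivative std_normal_density x) (at x)"
    by (auto simp: has_real_derivative_iff_has_vector_derivative intro!: derivative_eq_intros)
  then show ?thesis by (subst (asm) Phi_split[symmetric]) 
qed

lemma Phi_nn': "(\<integral>\<^sup>+y. ennreal (std_normal_density y) * indicator {..<x} y \<partial>lborel) = ennreal (Phi x)"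
proof -
  have "(\<integral>\<^sup>+y. ennreal (std_normal_density y) * indicator {..<x} y \<partial>lborel)
      = (\<integral>\<^sup>+y. ennreal (indicator {..<x} y *\<^sub>R std_normal_density y) \<partial>lborel)"
    by (intro nn_integral_cong) (auto split: split_indicator)
  also have "\<dots> = ennreal (\<integral>y. indicator {..<x} y *\<^sub>R std_normal_density y \<partial>lborel)"
    by (rule nn_integral_eq_integral) (auto intro!: snd_integrable_ind)
  finally show ?thesis by (simp add: Phi_eq)
qed

lemma snd_total: "(\<integral>\<^sup>+y. ennreal (std_normal_density y) \<partial>lborel) = 1"
proof -
  have "emeasure (density lborel std_normal_density) (space (density lborel std_normal_density)) = 1"
    by (rule prob_space.emeasure_space_1[OF prob_space_normal_density]) simp
  then have "emeasure (density lborel std_normal_density) UNIV = 1"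
    by simp
  then show ?thesis by (subst (asm) emeasure_density) auto
qed

lemma Phi_tail: "ennreal (Phi b) + (\<integral>\<^sup>+y. ennreal (std_normal_density y) * indicator {b..} y \<partial>lborel) = 1"
proof -
  have "ennreal (Phi b) + (\<integral>\<^sup>+y. ennreal (std_normal_density y) * indicator {b..} y \<partial>lborel)
     = (\<integral>\<^sup>+y. ennreal (std_normal_density y) * indicator {..<b} y + ennreal (std_normal_density y) * indicator {b..} y \<partial>lborel)"
    by (subst nn_integral_add) (auto simp: Phi_nn')
  also have "\<dots> = (\<integral>\<^sup>+y. ennreal (std_normal_density y) \<partial>lborel)"
    by (intro nn_integral_cong) (auto split: split_indicator)
  finally show ?thesis by (simp add: snd_total)
qed

lemma Phi_le1: "Phi b \<le> 1"
proof -
  have "ennreal (Phi b) \<le> ennreal (Phi b) + (\<integral>\<^sup>+y. ennreal (std_normal_density y) * indicator {b..} y \<partial>lborel)"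
    by simp
  then have "ennreal (Phi b) \<le> 1" using Phi_tail[of b] by simp
  then show ?thesis by simp
qed

lemma Phi_nonneg: "0 \<le> Phi b"
  unfolding Phi_eq by (intro integral_nonneg_AE) auto

lemma tail_eq: "(\<integral>\<^sup>+y. ennreal (std_normal_density y) * indicator {b..} y \<partial>lborel) = ennreal (1 - Phi b)"
proof -
  have "ennreal (1 - Phi b) + ennreal (Phi b) = 1"
    using Phi_le1[of b] Phi_nonneg[of b] by (simp add: ennreal_plus[symmetric] del: ennreal_plus)
  moreover have "ennreal (Phi b) + (\<integral>\<^sup>+y. ennreal (std_normal_density y) * indicator {b..} y \<partial>lborel) = 1"
    by (rule Phi_tail)
  ultimately have "ennreal (Phi b) + (\<integral>\<^sup>+y. ennreal (std_normal_density y) * indicator {b..} y \<partial>lborel)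
      = ennreal (Phi b) + ennreal (1 - Phi b)" by (simp add: add.commute)
  then show ?thesis using ennreal_add_left_cancel[of "ennreal (Phi b)"] by simp
qed

lemma snd_deriv: "(std_normal_density has_real_derivative (- x * std_normal_density x)) (at x)"
  unfolding std_normal_density_def
  by (auto intro!: derivative_eq_intros simp: power2_eq_square field_simps)

lemma hazard_gen:
  fixes b c :: real
  assumes c: "c > 0" and b0: "0 \<le> b" and cond: "c * b + c\<^sup>2 \<ge> 1"
  shows "std_normal_density b \<le> (b + c) * (1 - Phi b)"
proof -
  define F where "F x = - std_normal_density x / (x + c)" for x
  define f where "f x = std_normal_density x * (x * (x + c) + 1) / (x + c)\<^sup>2" for x
  have der: "DERIV F x :> f x" if "b \<le> x" for x
  proof -
    have "x + c > 0" using that b0 c by linarith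
    have "DERIV (\<lambda>x. - std_normal_density x / (x + c)) x :> ((- (-x * std_normal_density x)) * (x+c) - (- std_normal_density x) * (1 + 0)) / ((x + c) * (x + c))"
      by (rule DERIV_divide[OF DERIV_minus[OF snd_deriv] DERIV_add[OF DERIV_ident DERIV_const]]) (use \<open>x + c > 0\<close> in auto)
    moreover have "((- (-x * std_normal_density x)) * (x+c) - (- std_normal_density x) * (1 + 0)) / ((x + c) * (x + c)) = f x"
      unfolding f_def by (simp add: power2_eq_square algebra_simps)
    ultimately show ?thesis unfolding F_def by simp
  qed
  have fnn: "0 \<le> f x" if "b \<le> x" for x
  proof -
    have "x + c > 0" "0 \<le> x" using that b0 c by linarith+
    then have "x * (x + c) + 1 > 0"
      by (intro add_nonneg_pos mult_nonneg_nonneg) auto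
    then show ?thesis unfolding f_def by (auto intro!: divide_nonneg_nonneg)
  qed
  have lim: "(F \<longlongrightarrow> 0) at_top"
    unfolding F_def std_normal_density_def by real_asymp
  have fb: "f \<in> borel_measurable borel" unfolding f_def std_normal_density_def by measurable
  have I: "(\<integral>\<^sup>+x. ennreal (f x) * indicator {b ..} x \<partial>lborel) = 0 - F b"
    by (rule nn_integral_FTC_atLeast[OF fb der fnn lim])
  have fle: "f x \<le> std_normal_density x" if "b \<le> x" for x
  proof -
    have xc: "x + c > 0" using that b0 c by linarith
    have "c * b \<le> c * x" using that c by (intro mult_left_mono) auto
    then have "c * x + c\<^sup>2 \<ge> 1" using cond by linarith
    then have "x * (x + c) + 1 \<le> (x + c)\<^sup>2" by (simp add: power2_eq_square algebra_simps)
    then have "(x * (x + c) + 1) / (x + c)\<^sup>2 \<le> 1" using xc by simp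
    then show ?thesis unfolding f_def
      using mult_left_mono[of "(x * (x + c) + 1) / (x + c)\<^sup>2" 1 "std_normal_density x"]
      by simp
  qed
  have "ennreal (std_normal_density b / (b + c)) = (\<integral>\<^sup>+x. ennreal (f x) * indicator {b ..} x \<partial>lborel)"
    using I by (simp add: F_def)
  also have "\<dots> \<le> (\<integral>\<^sup>+y. ennreal (std_normal_density y) * indicator {b..} y \<partial>lborel)"
    by (intro nn_integral_mono) (auto split: split_indicator intro: fle)
  also have "\<dots> = ennreal (1 - Phi b)" by (rule tail_eq)
  finally have "std_normal_density b / (b + c) \<le> 1 - Phi b"
    using Phi_le1[of b] by (subst (asm) ennreal_le_iff) auto
  then show ?thesis using b0 c by (simp add: field_simps)
qed

lemma Phi_mono: "a \<le> b \<Longrightarrow> Phi a \<le> Phi b"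
  by (rule DERIV_nonneg_imp_nondecreasing[of a b Phi]) (auto intro: Phi_deriv)

lemma snd_le0: "std_normal_density b \<le> std_normal_density 0"
proof -
  have "exp (- b\<^sup>2 / 2) \<le> 1" by simp
  then show ?thesis unfolding std_normal_density_def by (simp add: divide_right_mono)
qed

lemma snd_anti: "0 \<le> t \<Longrightarrow> t \<le> b \<Longrightarrow> std_normal_density b \<le> std_normal_density t"
proof -
  assume "0 \<le> t" "t \<le> b"
  then have "t\<^sup>2 \<le> b\<^sup>2" by (intro power_mono) auto
  then have "exp (- b\<^sup>2 / 2) \<le> exp (- t\<^sup>2 / 2)" by simp
  then show ?thesis unfolding std_normal_density_def by (simp add: divide_right_mono)
qed

definition Hf :: "real \<Rightarrow> real" where "Hf t = (t + sqrt (t\<^sup>2 + 4)) / 2"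

lemma Hf_mono: "a \<le> b \<Longrightarrow> 0 \<le> a \<Longrightarrow> Hf a \<le> Hf b"
proof -
  assume "a \<le> b" "0 \<le> a"
  then have "a\<^sup>2 \<le> b\<^sup>2" by (intro power_mono) auto
  then have "sqrt (a\<^sup>2 + 4) \<le> sqrt (b\<^sup>2 + 4)" by simp
  then show ?thesis unfolding Hf_def using \<open>a \<le> b\<close> by (intro divide_right_mono add_mono) auto
qed

lemma Hf_ge1: "0 \<le> t \<Longrightarrow> 1 \<le> Hf t"
proof -
  assume "0 \<le> t"
  have "2 \<le> sqrt (t\<^sup>2 + 4)" by (rule real_le_rsqrt) simp
  then show ?thesis using \<open>0 \<le> t\<close> unfolding Hf_def by simp
qed

lemma hazard:
  assumes t: "0 \<le> t" and bt: "b < t"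
  shows "std_normal_density b \<le> Hf t * (1 - Phi b)"
proof (cases "0 \<le> b")
  case True
  define c where "c = (sqrt (b\<^sup>2 + 4) - b) / 2"
  have sq: "sqrt (b\<^sup>2 + 4) > b"
    using real_sqrt_less_mono[of "b\<^sup>2" "b\<^sup>2 + 4"] True by simp
  have c0: "c > 0" using sq by (simp add: c_def)
  define S where "S = sqrt (b\<^sup>2 + 4)"
  have "S\<^sup>2 = b\<^sup>2 + 4" unfolding S_def by simp
  then have S2: "S * S = b * b + 4" by (metis power2_eq_square)
  have cond: "c * b + c\<^sup>2 = 1" unfolding c_def S_def[symmetric] power2_eq_square
    using S2 by (simp add: field_simps)
  have "std_normal_density b \<le> (b + c) * (1 - Phi b)"
    by (rule hazard_gen) (use c0 True cond in auto)
  also have "b + c = Hf b" by (simp add: c_def Hf_def field_simps)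
  also have "Hf b * (1 - Phi b) \<le> Hf t * (1 - Phi b)"
    using Hf_mono[of b t] True bt Phi_le1[of b] by (intro mult_right_mono) auto
  finally show ?thesis .
next
  case False
  have "std_normal_density 0 \<le> (0 + 1) * (1 - Phi 0)"
    by (rule hazard_gen) auto
  then have "std_normal_density b \<le> 1 - Phi b"
    using snd_le0[of b] Phi_mono[of b 0] False by simp
  also have "\<dots> \<le> Hf t * (1 - Phi b)"
    using Hf_ge1[OF t] Phi_le1[of b] by (simp add: mult_le_cancel_right1)
  finally show ?thesis .
qed

lemma exactly_one:
  assumes "finite B" "\<And>i. i \<in> B \<Longrightarrow> 0 \<le> x i \<and> x i \<le> (1::real)"
  shows "(\<Sum>i\<in>B. (1 - x i) * (\<Prod>j\<in>B-{i}. x j)) \<le> 1"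
  using assms
proof (induction B rule: finite_induct)
  case empty
  then show ?case by simp
next
  case (insert k S)
  have xk: "0 \<le> x k" "x k \<le> 1" using insert.prems by auto
  have IH: "(\<Sum>i\<in>S. (1 - x i) * (\<Prod>j\<in>S-{i}. x j)) \<le> 1"
    using insert.IH insert.prems by auto
  have P: "(\<Prod>j\<in>S. x j) \<le> 1" "0 \<le> (\<Prod>j\<in>S. x j)"
    using insert.prems by (auto intro!: prod_le_1 prod_nonneg)
  have eq: "insert k S - {i} = insert k (S - {i})" if "i \<in> S" for i
    using insert.hyps that by auto
  have "(\<Sum>i\<in>insert k S. (1 - x i) * (\<Prod>j\<in>insert k S-{i}. x j))
      = (1 - x k) * (\<Prod>j\<in>S. x j) + (\<Sum>i\<in>S. (1 - x i) * (\<Prod>j\<in>insert k S-{i}. x j))"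
    using insert.hyps by (simp add: sum.insert)
  also have "(\<Sum>i\<in>S. (1 - x i) * (\<Prod>j\<in>insert k S-{i}. x j)) = x k * (\<Sum>i\<in>S. (1 - x i) * (\<Prod>j\<in>S-{i}. x j))"
    unfolding sum_distrib_left
    by (intro sum.cong refl) (use insert.hyps in \<open>auto simp: eq\<close>)
  also have "(1 - x k) * (\<Prod>j\<in>S. x j) + x k * (\<Sum>i\<in>S. (1 - x i) * (\<Prod>j\<in>S-{i}. x j)) \<le> (1 - x k) * 1 + x k * 1"
    using xk P IH by (intro add_mono mult_left_mono) auto
  finally show ?case by simp
qed

lemma S_bound:
  fixes I :: "'a set" and c :: "'a \<Rightarrow> real"
  assumes fin: "finite I" and t: "0 \<le> t"
  shows "(\<Sum>i\<in>I. std_normal_density (c i) * (\<Prod>j\<in>I-{i}. Phi (c j))) \<le> Hf t + card I * std_normal_density t"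
proof -
  define A where "A = {i\<in>I. t \<le> c i}"
  define B where "B = {i\<in>I. c i < t}"
  have AB: "I = A \<union> B" "A \<inter> B = {}" "finite A" "finite B" using fin by (auto simp: A_def B_def)
  have P01: "0 \<le> Phi x" "Phi x \<le> 1" for x by (rule Phi_nonneg, rule Phi_le1)
  have "(\<Sum>i\<in>I. std_normal_density (c i) * (\<Prod>j\<in>I-{i}. Phi (c j)))
      = (\<Sum>i\<in>A. std_normal_density (c i) * (\<Prod>j\<in>I-{i}. Phi (c j))) + (\<Sum>i\<in>B. std_normal_density (c i) * (\<Prod>j\<in>I-{i}. Phi (c j)))"
    using AB by (simp add: sum.union_disjoint)
  also have "(\<Sum>i\<in>A. std_normal_density (c i) * (\<Prod>j\<in>I-{i}. Phi (c j))) \<le> (\<Sum>i\<in>A. std_normal_density t)"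
  proof (intro sum_mono)
    fix i assume i: "i \<in> A"
    have "(\<Prod>j\<in>I-{i}. Phi (c j)) \<le> 1" "0 \<le> (\<Prod>j\<in>I-{i}. Phi (c j))"
      using P01 by (auto intro!: prod_le_1 prod_nonneg)
    moreover have "std_normal_density (c i) \<le> std_normal_density t" "0 \<le> std_normal_density (c i)"
      using snd_anti[OF t] i by (auto simp: A_def)
    ultimately show "std_normal_density (c i) * (\<Prod>j\<in>I-{i}. Phi (c j)) \<le> std_normal_density t"
      by (metis mult_left_le order_trans)
  qed
  also have "(\<Sum>i\<in>A. std_normal_density t) \<le> card I * std_normal_density t"
  proof -
    have "card A \<le> card I" using fin by (intro card_mono) (auto simp: A_def)
    then show ?thesis by (simp add: mult_right_mono)
  qed
  also have "(\<Sum>i\<in>B. std_normal_density (c i) * (\<Prod>j\<in>I-{i}. Phi (c j)))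
      \<le> (\<Sum>i\<in>B. Hf t * ((1 - Phi (c i)) * (\<Prod>j\<in>B-{i}. Phi (c j))))"
  proof (intro sum_mono)
    fix i assume i: "i \<in> B"
    have sub: "B - {i} \<subseteq> I - {i}" using AB by auto
    have "(\<Prod>j\<in>I-{i}. Phi (c j)) = (\<Prod>j\<in>B-{i}. Phi (c j)) * (\<Prod>j\<in>(I-{i})-(B-{i}). Phi (c j))"
      using prod.subset_diff[OF sub] fin by (simp add: mult.commute)
    also have "\<dots> \<le> (\<Prod>j\<in>B-{i}. Phi (c j))"
      using P01 by (intro mult_left_le prod_le_1 prod_nonneg) auto
    finally have pr: "(\<Prod>j\<in>I-{i}. Phi (c j)) \<le> (\<Prod>j\<in>B-{i}. Phi (c j))" .
    have hz: "std_normal_density (c i) \<le> Hf t * (1 - Phi (c i))"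
      using hazard[OF t, of "c i"] i by (auto simp: B_def)
    have "std_normal_density (c i) * (\<Prod>j\<in>I-{i}. Phi (c j)) \<le> std_normal_density (c i) * (\<Prod>j\<in>B-{i}. Phi (c j))"
      using pr by (intro mult_left_mono) auto
    also have "\<dots> \<le> Hf t * (1 - Phi (c i)) * (\<Prod>j\<in>B-{i}. Phi (c j))"
      using hz P01 by (intro mult_right_mono prod_nonneg) auto
    finally show "std_normal_density (c i) * (\<Prod>j\<in>I-{i}. Phi (c j)) \<le> Hf t * ((1 - Phi (c i)) * (\<Prod>j\<in>B-{i}. Phi (c j)))"
      by (simp add: mult.assoc)
  qed
  also have "(\<Sum>i\<in>B. Hf t * ((1 - Phi (c i)) * (\<Prod>j\<in>B-{i}. Phi (c j)))) \<le> Hf t * 1"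
    unfolding sum_distrib_left[symmetric]
    using exactly_one[of B "\<lambda>j. Phi (c j)"] AB P01 Hf_ge1[OF t]
    by (intro mult_left_mono) auto
  finally show ?thesis by simp
qed

lemma gauss_increment:
  fixes I :: "'a set" and c :: "'a \<Rightarrow> real"
  assumes fin: "finite I" and t: "0 \<le> t" and e: "0 \<le> e"
  shows "(\<Prod>i\<in>I. Phi (c i + e)) - (\<Prod>i\<in>I. Phi (c i)) \<le> (Hf t + card I * std_normal_density t) * e"
proof -
  define K where "K = Hf t + card I * std_normal_density t"
  define g where "g s = K * s - (\<Prod>i\<in>I. Phi (c i + s))" for s
  have d: "DERIV g s :> K - (\<Sum>i\<in>I. std_normal_density (c i + s) * (\<Prod>j\<in>I-{i}. Phi (c j + s)))" for s
  proof -
    have "((\<lambda>u. \<Prod>i\<in>I. Phi (c i + u)) has_field_derivative (\<Sum>i\<in>I. std_normal_density (c i + s) * (\<Prod>j\<in>I-{i}. Phi (c j + s)))) (at s)"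
    proof (rule has_field_derivative_prod)
      fix i
      have "((\<lambda>u. c i + u) has_field_derivative 1) (at s)" by (auto intro!: derivative_eq_intros)
      from DERIV_chain2[OF Phi_deriv this]
      show "((\<lambda>u. Phi (c i + u)) has_field_derivative std_normal_density (c i + s)) (at s)" by simp
    qed
    then show ?thesis unfolding g_def by (auto intro!: derivative_eq_intros)
  qed
  have "g 0 \<le> g e"
  proof (rule DERIV_nonneg_imp_nondecreasing[OF e])
    fix s assume "0 \<le> s" "s \<le> e"
    show "\<exists>y. DERIV g s :> y \<and> 0 \<le> y"
      using d[of s] S_bound[OF fin t, of "\<lambda>i. c i + s"] by (auto simp: K_def)
  qed
  then show ?thesis unfolding g_def K_def by simp
qed

lemma Basis_vec_all: "(\<forall>B\<in>(Basis :: (real^'n) set). P B) \<longleftrightarrow> (\<forall>i. P (axis i 1))"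
  by (auto simp: Basis_vec_def)

lemma lower_orthant_Basis: "x \<in> lower_orthant b \<longleftrightarrow> (\<forall>B\<in>(Basis :: (real^'n) set). x \<bullet> B \<le> b \<bullet> B)"
  unfolding Basis_vec_all lower_orthant_def by (simp add: cart_eq_inner_axis)

lemma lower_orthant_closed: "closed (lower_orthant (b :: real^'n))"
  unfolding lower_orthant_def
  by (intro closed_Collect_all closed_Collect_le continuous_intros)

lemma lower_orthant_borel[measurable]: "lower_orthant (b :: real^'n) \<in> sets borel"
  using lower_orthant_closed by (rule borel_closed)

lemma card_Basis_vec: "card (Basis :: (real^'n) set) = CARD('n)"
  using DIM_cart[where 'a=real and 'b='n] by simp

lemma gauss_density_prod:
  fixes x mu :: "real^'n"
  shows "(2 * pi) powr (- real CARD('n) / 2) * exp (- (norm (x - mu))\<^sup>2 / 2)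
       = (\<Prod>B\<in>Basis. normal_density (mu \<bullet> B) 1 (x \<bullet> B))"
proof -
  define v where "v = x - mu"
  have nd: "normal_density (mu \<bullet> B) 1 (x \<bullet> B) = (1 / sqrt (2 * pi)) * exp (- (v \<bullet> B)\<^sup>2 / 2)" for B
    unfolding normal_density_def v_def by (simp add: inner_diff_left)
  have A: "(\<Prod>B\<in>Basis. normal_density (mu \<bullet> B) 1 (x \<bullet> B))
      = (\<Prod>B\<in>(Basis :: (real^'n) set). (1 / sqrt (2 * pi)) * exp (- (v \<bullet> B)\<^sup>2 / 2))"
    by (rule prod.cong[OF refl]) (rule nd)
  also have "\<dots> = (1 / sqrt (2 * pi)) ^ card (Basis :: (real^'n) set) * (\<Prod>B\<in>(Basis :: (real^'n) set). exp (- (v \<bullet> B)\<^sup>2 / 2))"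
    by (simp only: prod.distrib prod_constant)
  also have "(\<Prod>B\<in>(Basis :: (real^'n) set). exp (- (v \<bullet> B)\<^sup>2 / 2)) = exp (\<Sum>B\<in>Basis. - (v \<bullet> B)\<^sup>2 / 2)"
    by (rule exp_sum[symmetric]) simp
  also have "(\<Sum>B\<in>(Basis :: (real^'n) set). - (v \<bullet> B)\<^sup>2 / 2) = (\<Sum>B\<in>(Basis :: (real^'n) set). - (v \<bullet> B)\<^sup>2) / 2"
    by (rule sum_divide_distrib[symmetric])
  also have "(\<Sum>B\<in>(Basis :: (real^'n) set). - (v \<bullet> B)\<^sup>2) = - (\<Sum>B\<in>(Basis :: (real^'n) set). (v \<bullet> B)\<^sup>2)"
    by (rule sum_negf)
  also have "(\<Sum>B\<in>(Basis :: (real^'n) set). (v \<bullet> B)\<^sup>2) = (norm v)\<^sup>2"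
  proof -
    have "(norm v)\<^sup>2 = v \<bullet> v" by (rule power2_norm_eq_inner)
    also have "\<dots> = (\<Sum>B\<in>(Basis :: (real^'n) set). (v \<bullet> B) * (v \<bullet> B))" by (rule euclidean_inner)
    finally show ?thesis by (simp only: power2_eq_square)
  qed
  also have "(1 / sqrt (2 * pi)) ^ card (Basis :: (real^'n) set) = (2 * pi) powr (- real CARD('n) / 2)"
  proof -
    have "(2 * pi) powr (- real CARD('n) / 2) = 1 / (2 * pi) powr (real CARD('n) / 2)"
      by (simp only: minus_divide_left[symmetric] powr_minus_divide)
    also have "(2 * pi) powr (real CARD('n) / 2) = sqrt ((2 * pi) powr real CARD('n))"
      by (rule powr_half_sqrt_powr) simp
    also have "(2 * pi) powr real CARD('n) = (2 * pi) ^ CARD('n)"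
      by (rule powr_realpow) simp
    also have "sqrt ((2 * pi) ^ CARD('n)) = sqrt (2 * pi) ^ CARD('n)"
      by (rule real_sqrt_power)
    finally show ?thesis by (simp only: card_Basis_vec power_one_over)
  qed
  finally show ?thesis unfolding v_def by (simp only: mult.commute)
qed

lemma shift_Phi: "(\<integral>\<^sup>+y. ennreal (normal_density m 1 y) * indicator {..\<beta>} y \<partial>lborel) = ennreal (Phi (\<beta> - m))"
proof -
  have "(\<integral>\<^sup>+y. ennreal (normal_density m 1 y) * indicator {..\<beta>} y \<partial>lborel)
     = (\<integral>\<^sup>+y. ennreal (normal_density m 1 (m + y)) * indicator {..\<beta>} (m + y) \<partial>lborel)"
    using nn_integral_real_affine[of "\<lambda>y. ennreal (normal_density m 1 y) * indicator {..\<beta>} y" 1 m] by simp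
  also have "\<dots> = (\<integral>\<^sup>+y. ennreal (std_normal_density y) * indicator {..\<beta> - m} y \<partial>lborel)"
    by (intro nn_integral_cong) (auto simp: normal_density_def split: split_indicator)
  finally show ?thesis by (simp add: Phi_nn)
qed

lemma gauss_orthant:
  fixes mu b :: "real^'n"
  shows "measure (gaussian_id_cov mu) (lower_orthant b) = (\<Prod>B\<in>Basis. Phi (b \<bullet> B - mu \<bullet> B))"
proof -
  let ?g = "\<lambda>B y. ennreal (normal_density (mu \<bullet> B) 1 y) * indicator {..b \<bullet> B} y"
  have "emeasure (gaussian_id_cov mu) (lower_orthant b)
      = (\<integral>\<^sup>+x. ennreal ((2 * pi) powr (- real CARD('n) / 2) * exp (- (norm (x - mu))\<^sup>2 / 2)) * indicator (lower_orthant b) x \<partial>lborel)"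
    unfolding gaussian_id_cov_def by (subst emeasure_density) auto
  also have "\<dots> = (\<integral>\<^sup>+x. (\<Prod>B\<in>Basis. ?g B (x \<bullet> B)) \<partial>lborel)"
  proof (intro nn_integral_cong)
    fix x :: "real^'n"
    have "(\<Prod>B\<in>Basis. ?g B (x \<bullet> B)) = (\<Prod>B\<in>Basis. ennreal (normal_density (mu \<bullet> B) 1 (x \<bullet> B))) * (\<Prod>B\<in>Basis. indicator {..b \<bullet> B} (x \<bullet> B))"
      by (simp add: prod.distrib)
    also have "(\<Prod>B\<in>(Basis :: (real^'n) set). indicator {..b \<bullet> B} (x \<bullet> B) :: ennreal) = indicator (lower_orthant b) x"
    proof (cases "x \<in> lower_orthant b")
      case True
      then show ?thesis by (auto simp: lower_orthant_Basis indicator_def intro!: prod.neutral)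
    next
      case False
      then obtain B :: "real^'n" where B: "B \<in> Basis" "\<not> x \<bullet> B \<le> b \<bullet> B"
        by (auto simp: lower_orthant_Basis)
      have "(\<Prod>B\<in>(Basis :: (real^'n) set). indicator {..b \<bullet> B} (x \<bullet> B) :: ennreal) = 0"
        by (rule prod_zero) (use B in \<open>auto intro!: bexI[of _ B]\<close>)
      then show ?thesis using False by simp
    qed
    also have "(\<Prod>B\<in>(Basis :: (real^'n) set). ennreal (normal_density (mu \<bullet> B) 1 (x \<bullet> B))) = ennreal (\<Prod>B\<in>Basis. normal_density (mu \<bullet> B) 1 (x \<bullet> B))"
      by (rule prod_ennreal) auto
    finally have eq: "(\<Prod>B\<in>Basis. ?g B (x \<bullet> B)) = ennreal (\<Prod>B\<in>Basis. normal_density (mu \<bullet> B) 1 (x \<bullet> B)) * indicator (lower_orthant b) x" .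
    show "ennreal ((2 * pi) powr (- real CARD('n) / 2) * exp (- (norm (x - mu))\<^sup>2 / 2)) * indicator (lower_orthant b) x = (\<Prod>B\<in>Basis. ?g B (x \<bullet> B))"
      by (simp only: gauss_density_prod eq)
  qed
  also have "\<dots> = (\<Prod>B\<in>Basis. (\<integral>\<^sup>+y. ?g B y \<partial>lborel))"
    by (rule nn_integral_lborel_prod) auto
  also have "\<dots> = (\<Prod>B\<in>Basis. ennreal (Phi (b \<bullet> B - mu \<bullet> B)))"
    by (simp add: shift_Phi)
  also have "\<dots> = ennreal (\<Prod>B\<in>Basis. Phi (b \<bullet> B - mu \<bullet> B))"
    by (rule prod_ennreal) (auto simp: Phi_nonneg)
  finally show ?thesis unfolding measure_def
    by (simp add: prod_nonneg Phi_nonneg)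
qed

lemma exp_frac_le:
  fixes y :: real
  assumes "exp 1 ^ p \<le> y ^ q" "0 < q" "0 \<le> y"
  shows "exp (real p / real q) \<le> y"
proof -
  have "exp (real p / real q) ^ q = exp (real q * (real p / real q))"
    by (rule exp_of_nat_mult[symmetric])
  also have "\<dots> = exp (real p * 1)" using assms(2) by simp
  also have "\<dots> = exp 1 ^ p" by (simp only: exp_of_nat_mult)
  finally have "exp (real p / real q) ^ q \<le> y ^ q" using assms(1) by simp
  then show ?thesis using assms(2,3) by (meson not_le power_strict_mono)
qed

lemma e272: "exp (1::real) \<le> 272/100" using e_less_272 by simp

lemma ln2_ge: "1/2 \<le> ln (2::real)"
proof -
  have "exp 1 ^ 1 \<le> (2::real) ^ 2" using e272 by simp
  from exp_frac_le[OF this] have "exp (real 1 / real 2) \<le> 2" by simp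
  then show ?thesis by (subst ln_ge_iff) auto
qed

lemma ln3_ge: "2/3 \<le> ln (3::real)"
proof -
  have "exp 1 ^ 2 \<le> (272/100::real) ^ 2" using e272 by (intro power_mono) auto
  also have "\<dots> \<le> (3::real) ^ 3" by (simp add: power_divide divide_le_eq)
  finally have "exp 1 ^ 2 \<le> (3::real) ^ 3" .
  from exp_frac_le[OF this] have "exp (real 2 / real 3) \<le> 3" by simp
  then show ?thesis by (subst ln_ge_iff) auto
qed

lemma ln4_ge: "1 \<le> ln (4::real)"
proof -
  have "exp 1 \<le> (4::real)" using e272 by simp
  then show ?thesis by (subst ln_ge_iff) auto
qed

lemma ln5_ge: "8/5 \<le> ln (5::real)"
proof -
  have "exp 1 ^ 8 \<le> (272/100::real) ^ 8" using e272 by (intro power_mono) auto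
  also have "\<dots> \<le> (5::real) ^ 5" by (simp add: power_divide divide_le_eq)
  finally have "exp 1 ^ 8 \<le> (5::real) ^ 5" .
  from exp_frac_le[OF this] have "exp (real 8 / real 5) \<le> 5" by simp
  then show ?thesis by (subst ln_ge_iff) auto
qed

lemma inv_sqrt2pi: "1 / sqrt (2 * pi) \<le> 2/5"
proof -
  have "(5/2::real)\<^sup>2 \<le> 2 * pi" using pi_approx by (simp add: power2_eq_square)
  then have "5/2 \<le> sqrt (2 * pi)" by (rule real_le_rsqrt)
  then show ?thesis by (simp add: field_simps)
qed

lemma snd0: "std_normal_density 0 = 1 / sqrt (2 * pi)"
  unfolding std_normal_density_def by simp

lemma Hf0: "Hf 0 = 1"
proof -
  have "sqrt 4 = (2::real)" using real_sqrt_abs[of 2] by simp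
  then show ?thesis unfolding Hf_def by simp
qed

lemma small_d:
  assumes "1 \<le> d" "d \<le> (3::nat)"
  shows "Hf 0 + real d * std_normal_density 0 \<le> 9/4 * sqrt (ln (real d + 1))"
proof -
  have "real d * (1 / sqrt (2 * pi)) \<le> real d * (2/5)"
    by (rule mult_left_mono[OF inv_sqrt2pi]) simp
  then have "Hf 0 + real d * std_normal_density 0 \<le> 1 + real d * (2/5)"
    by (simp only: Hf0 snd0)
  moreover have "1 + real d * (2/5) \<le> 9/4 * sqrt (ln (real d + 1))"
  proof -
    have "d = 1 \<or> d = 2 \<or> d = 3" using assms by auto
    then have "(4/9 * (1 + real d * (2/5)))\<^sup>2 \<le> ln (real d + 1)"
      using ln2_ge ln3_ge ln4_ge by (auto simp: power2_eq_square)
    then have "4/9 * (1 + real d * (2/5)) \<le> sqrt (ln (real d + 1))" by (rule real_le_rsqrt)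
    then show ?thesis by simp
  qed
  ultimately show ?thesis by linarith
qed

lemma large_d:
  assumes "4 \<le> d"
  defines "t \<equiv> sqrt (2 * ln (real d + 1))"
  shows "0 \<le> t" and "Hf t + real d * std_normal_density t \<le> 9/4 * sqrt (ln (real d + 1))"
proof -
  define L where "L = ln (real d + 1)"
  define r where "r = sqrt L"
  have L5: "ln 5 \<le> L" unfolding L_def using assms by simp
  then have L: "8/5 \<le> L" using ln5_ge by linarith
  have r: "126/100 \<le> r" unfolding r_def by (rule real_le_rsqrt) (use L in \<open>simp add: power2_eq_square\<close>)
  have s1: "1414/1000 \<le> sqrt (2::real)" by (rule real_le_rsqrt) (simp add: power2_eq_square)
  have s2: "sqrt (2::real) \<le> 14143/10000" by (rule real_le_lsqrt) (auto simp: power2_eq_square)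
  have tr: "t = sqrt 2 * r" unfolding t_def r_def L_def by (simp add: real_sqrt_mult)
  show t0: "0 \<le> t" unfolding t_def by simp
  have tpos: "t > 0" using tr r s1 by simp
  have "t\<^sup>2 = 2 * L" unfolding t_def L_def using L L_def by simp
  then have "exp (- t\<^sup>2 / 2) = exp (- L)" by simp
  also have "\<dots> = 1 / (real d + 1)" unfolding L_def by (simp add: exp_minus inverse_eq_divide)
  finally have et: "exp (- t\<^sup>2 / 2) = 1 / (real d + 1)" .
  have "real d * std_normal_density t = (real d / (real d + 1)) * (1 / sqrt (2 * pi))"
    unfolding std_normal_density_def et by simp
  also have "\<dots> \<le> 1 * (2/5)"
    using inv_sqrt2pi by (intro mult_mono) auto
  finally have A: "real d * std_normal_density t \<le> 2/5" by simp
  have "sqrt (t\<^sup>2 + 4) \<le> t + 2 / t"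
  proof (rule real_le_lsqrt)
    show "0 \<le> t + 2 / t" using tpos by simp
    have "(t + 2 / t)\<^sup>2 = t\<^sup>2 + 4 + 4 / t\<^sup>2" using tpos by (simp add: power2_eq_square field_simps)
    then show "t\<^sup>2 + 4 \<le> (t + 2 / t)\<^sup>2" by simp
  qed
  then have B: "Hf t \<le> t + 1 / t" unfolding Hf_def by simp
  have "1 / t \<le> 1 / ((1414/1000) * (126/100))"
    unfolding tr using s1 r by (intro divide_left_mono mult_mono) auto
  then have C: "1 / t \<le> 5613 / 10000" by simp
  have D: "t \<le> 14143/10000 * r" unfolding tr using s2 r by (intro mult_right_mono) auto
  have "Hf t + real d * std_normal_density t \<le> 14143/10000 * r + 5613 / 10000 + 2/5"
    using A B C D by linarith
  also have "\<dots> \<le> 9/4 * r" using r by linarith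
  finally show "Hf t + real d * std_normal_density t \<le> 9/4 * sqrt (ln (real d + 1))"
    by (simp add: r_def L_def)
qed

lemma kappa_exists:
  assumes "1 \<le> d"
  shows "\<exists>t\<ge>0. Hf t + real d * std_normal_density t \<le> 9/4 * sqrt (ln (real d + 1))"
proof (cases "d \<le> 3")
  case True
  then show ?thesis using small_d[OF assms True] by (intro exI[of _ 0]) auto
next
  case False
  then have "4 \<le> d" by simp
  from large_d[OF this] show ?thesis by blast
qed

lemma orth_closed: "closed (lower_orthant (b :: real^'n))"
  unfolding lower_orthant_def
  by (intro closed_Collect_all closed_Collect_le continuous_intros)

lemma meas_fst: "{z :: (real^'n) \<times> (real^'n). fst z \<in> lower_orthant a} \<in> sets borel"
proof -
  have "closed {z :: (real^'n) \<times> (real^'n). fst z \<in> lower_orthant a}"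
    using closed_vimage_fst[OF orth_closed[of a]] by (simp add: vimage_def)
  then show ?thesis by (rule borel_closed)
qed

lemma meas_snd: "{z :: (real^'n) \<times> (real^'n). snd z \<in> lower_orthant a} \<in> sets borel"
  by (rule borel_closed) (use closed_vimage_snd[OF orth_closed[of a]] in \<open>simp add: vimage_def\<close>)

lemma meas_dist: "{z :: (real^'n) \<times> (real^'n). e < norm (fst z - snd z)} \<in> sets borel"
  by (rule borel_open) (auto intro!: open_Collect_less continuous_intros)

lemma coupling_bound:
  fixes P Q :: "(real^'n) measure" and C
  assumes C: "C \<in> couplings P Q" and e: "0 < e"
    and Ifin: "(\<integral>\<^sup>+ z. ennreal (norm (fst z - snd z)) \<partial>C) < \<infinity>"
  defines "w \<equiv> enn2real (\<integral>\<^sup>+ z. ennreal (norm (fst z - snd z)) \<partial>C)"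
  shows "measure P (lower_orthant a) \<le> measure Q (lower_orthant (\<chi> i. a $ i + e)) + w / e"
    and "measure Q (lower_orthant (\<chi> i. a $ i - e)) \<le> measure P (lower_orthant a) + w / e"
proof -
  interpret C: prob_space C using C by (simp add: couplings_def)
  have sC: "sets C = sets borel" using C by (simp add: couplings_def)
  have spC: "space C = UNIV" using sets_eq_imp_space_eq[OF sC] by simp
  have PC: "P = distr C borel fst" and QC: "Q = distr C borel snd" using C by (auto simp: couplings_def)
  have "(\<lambda>z. fst z) \<in> borel_measurable (borel :: ((real^'n) \<times> (real^'n)) measure)"
    by (intro borel_measurable_continuous_onI continuous_intros)
  then have mfst: "fst \<in> measurable C borel"
    unfolding measurable_cong_sets[OF sC refl] .
  have "(\<lambda>z. snd z) \<in> borel_measurable (borel :: ((real^'n) \<times> (real^'n)) measure)"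
    by (intro borel_measurable_continuous_onI continuous_intros)
  then have msnd: "snd \<in> measurable C borel"
    unfolding measurable_cong_sets[OF sC refl] .
  have Pm: "measure P (lower_orthant b) = C.prob {z. fst z \<in> lower_orthant b}" for b
    unfolding PC by (subst measure_distr[OF mfst]) (auto simp: spC vimage_def intro: borel_closed orth_closed)
  have Qm: "measure Q (lower_orthant b) = C.prob {z. snd z \<in> lower_orthant b}" for b
    unfolding QC by (subst measure_distr[OF msnd]) (auto simp: spC vimage_def intro: borel_closed orth_closed)
  define D where "D = {z :: (real^'n) \<times> (real^'n). e < norm (fst z - snd z)}"
  have Ds: "D \<in> sets C" unfolding D_def sC by (rule meas_dist)
  have Fs: "{z :: (real^'n) \<times> (real^'n). fst z \<in> lower_orthant b} \<in> sets C" for b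
    unfolding sC by (rule meas_fst)
  have Ss: "{z :: (real^'n) \<times> (real^'n). snd z \<in> lower_orthant b} \<in> sets C" for b
    unfolding sC by (rule meas_snd)
  have "ennreal e * emeasure C D = (\<integral>\<^sup>+ z. ennreal e * indicator D z \<partial>C)"
    using Ds by (simp add: nn_integral_cmult_indicator)
  also have "\<dots> \<le> (\<integral>\<^sup>+ z. ennreal (norm (fst z - snd z)) \<partial>C)"
    by (intro nn_integral_mono) (auto simp: D_def split: split_indicator)
  also have "\<dots> = ennreal w" unfolding w_def using Ifin by (simp add: less_top)
  finally have "ennreal (e * C.prob D) \<le> ennreal w"
    using e by (simp add: C.emeasure_eq_measure ennreal_mult)
  then have "e * C.prob D \<le> w" using w_def by (subst (asm) ennreal_le_iff) (auto simp: w_def)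
  then have Dw: "C.prob D \<le> w / e" using e by (simp add: field_simps)
  have comp: "\<bar>x $ i - y $ i\<bar> \<le> e" if "\<not> e < norm (x - y)" for x y :: "real^'n" and i
    using component_le_norm_cart[of "x - y" i] that by simp
  have "{z. fst z \<in> lower_orthant a} \<subseteq> {z. snd z \<in> lower_orthant (\<chi> i. a $ i + e)} \<union> D"
  proof
    fix z :: "(real^'n) \<times> (real^'n)" assume z: "z \<in> {z. fst z \<in> lower_orthant a}"
    show "z \<in> {z. snd z \<in> lower_orthant (\<chi> i. a $ i + e)} \<union> D"
    proof (cases "z \<in> D")
      case False
      then have ab: "\<bar>fst z $ i - snd z $ i\<bar> \<le> e" for i using comp by (auto simp: D_def)
      have "snd z $ i \<le> a $ i + e" for i
      proof -
        have "fst z $ i \<le> a $ i" using z by (auto simp: lower_orthant_def)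
        then show ?thesis using ab[of i] by linarith
      qed
      then show ?thesis by (auto simp: lower_orthant_def)
    qed auto
  qed
  then have "C.prob {z. fst z \<in> lower_orthant a} \<le> C.prob ({z. snd z \<in> lower_orthant (\<chi> i. a $ i + e)} \<union> D)"
    using Ss Ds by (intro C.finite_measure_mono) auto
  also have "\<dots> \<le> C.prob {z. snd z \<in> lower_orthant (\<chi> i. a $ i + e)} + C.prob D"
    using Ss Ds by (intro measure_Un_le) auto
  finally show "measure P (lower_orthant a) \<le> measure Q (lower_orthant (\<chi> i. a $ i + e)) + w / e"
    using Dw by (simp add: Pm Qm)
  have "{z. snd z \<in> lower_orthant (\<chi> i. a $ i - e)} \<subseteq> {z. fst z \<in> lower_orthant a} \<union> D"
  proof
    fix z :: "(real^'n) \<times> (real^'n)" assume z: "z \<in> {z. snd z \<in> lower_orthant (\<chi> i. a $ i - e)}"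
    show "z \<in> {z. fst z \<in> lower_orthant a} \<union> D"
    proof (cases "z \<in> D")
      case False
      then have ab: "\<bar>fst z $ i - snd z $ i\<bar> \<le> e" for i using comp by (auto simp: D_def)
      have "fst z $ i \<le> a $ i" for i
      proof -
        have "snd z $ i \<le> a $ i - e" using z by (auto simp: lower_orthant_def)
        then show ?thesis using ab[of i] by linarith
      qed
      then show ?thesis by (auto simp: lower_orthant_def)
    qed auto
  qed
  then have "C.prob {z. snd z \<in> lower_orthant (\<chi> i. a $ i - e)} \<le> C.prob ({z. fst z \<in> lower_orthant a} \<union> D)"
    using Fs Ds by (intro C.finite_measure_mono) auto
  also have "\<dots> \<le> C.prob {z. fst z \<in> lower_orthant a} + C.prob D"
    using Fs Ds by (intro measure_Un_le) auto
  finally show "measure Q (lower_orthant (\<chi> i. a $ i - e)) \<le> measure P (lower_orthant a) + w / e"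
    using Dw by (simp add: Pm Qm)
qed

lemma gauss_incr:
  fixes mu b :: "real^'n"
  assumes t: "0 \<le> t" and e: "0 \<le> e"
  shows "measure (gaussian_id_cov mu) (lower_orthant (\<chi> i. b $ i + e)) - measure (gaussian_id_cov mu) (lower_orthant b)
         \<le> (Hf t + real CARD('n) * std_normal_density t) * e"
proof -
  have "\<forall>B\<in>(Basis :: (real^'n) set). (\<chi> i. b $ i + e) \<bullet> B = b \<bullet> B + e"
    unfolding Basis_vec_all by (simp add: cart_eq_inner_axis[symmetric])
  then have inn: "(\<chi> i. b $ i + e) \<bullet> B = b \<bullet> B + e" if "B \<in> Basis" for B :: "real^'n"
    using that by blast
  have "(\<Prod>B\<in>(Basis :: (real^'n) set). Phi ((\<chi> i. b $ i + e) \<bullet> B - mu \<bullet> B)) = (\<Prod>B\<in>Basis. Phi ((b \<bullet> B - mu \<bullet> B) + e))"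
    by (intro prod.cong refl) (subst inn, assumption, simp add: algebra_simps)
  then show ?thesis
    using gauss_increment[of "Basis :: (real^'n) set" t e "\<lambda>B. b \<bullet> B - mu \<bullet> B"] t e
    by (simp add: gauss_orthant card_Basis_vec)
qed

theorem theorem3p3:
  fixes M :: "'a measure" and N :: "'b measure"
    and X :: "'a \<Rightarrow> real^'n" and G :: "'b \<Rightarrow> real^'n" and mu :: "real^'n"
  assumes "prob_space M" and "X \<in> borel_measurable M"
    and "prob_space N" and "G \<in> borel_measurable N"
    and "distr N borel G = gaussian_id_cov mu"
    and "wasserstein1 (distr M borel X) (distr N borel G) < \<infinity>"
  shows "kolmogorov_dist (distr M borel X) (distr N borel G)
           \<le> 3 * (ln (real CARD('n) + 1)) powr (1/4)
               * sqrt (enn2real (wasserstein1 (distr M borel X) (distr N borel G)))"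
proof -
  define P where "P = distr M borel X"
  define Q where "Q = distr N borel G"
  define W where "W = wasserstein1 P Q"
  define w where "w = enn2real W"
  define L where "L = ln (real CARD('n) + 1)"
  define K where "K = 9/4 * sqrt L"
  have Wfin: "W < \<infinity>" using assms(6) by (simp add: W_def P_def Q_def)
  have w0: "0 \<le> w" by (simp add: w_def)
  have Wdef: "W = ennreal w" using Wfin by (simp add: w_def less_top)
  have Lpos: "0 < L" unfolding L_def by simp
  have Kpos: "0 < K" unfolding K_def using Lpos by simp
  obtain t where t0: "0 \<le> t" and tK: "Hf t + real CARD('n) * std_normal_density t \<le> K"
    using kappa_exists[of "CARD('n)"] by (auto simp: K_def L_def Suc_le_eq)
  have incr: "measure Q (lower_orthant (\<chi> i. b $ i + e)) - measure Q (lower_orthant b) \<le> K * e"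
    if "0 \<le> e" for b e
  proof -
    have "measure Q (lower_orthant (\<chi> i. b $ i + e)) - measure Q (lower_orthant b)
        \<le> (Hf t + real CARD('n) * std_normal_density t) * e"
      unfolding Q_def assms(5) by (rule gauss_incr[OF t0 that])
    also have "\<dots> \<le> K * e" using tK that by (intro mult_right_mono) auto
    finally show ?thesis .
  qed
  have main: "\<bar>measure P (lower_orthant a) - measure Q (lower_orthant a)\<bar> \<le> K * e + w / e"
    if e: "0 < e" for a e
  proof (rule field_le_epsilon)
    fix \<delta> :: real assume \<delta>: "0 < \<delta>"
    have "W < W + ennreal (\<delta> * e)" using Wfin \<delta> e
      by (simp add: Wdef ennreal_plus[symmetric] del: ennreal_plus)
    then obtain C where C: "C \<in> couplings P Q"
      and CI: "(\<integral>\<^sup>+ z. ennreal (norm (fst z - snd z)) \<partial>C) < W + ennreal (\<delta> * e)"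
      unfolding W_def wasserstein1_def by (auto simp: INF_less_iff)
    define I where "I = (\<integral>\<^sup>+ z. ennreal (norm (fst z - snd z)) \<partial>C)"
    have Wt: "W + ennreal (\<delta> * e) < \<infinity>" using Wfin by simp
    have Ifin: "I < \<infinity>" unfolding I_def using less_trans[OF CI Wt] .
    have wI: "enn2real I \<le> w + \<delta> * e"
    proof -
      have "enn2real I \<le> enn2real (W + ennreal (\<delta> * e))"
        using CI unfolding I_def by (intro enn2real_mono) (auto simp: Wdef ennreal_plus[symmetric] simp del: ennreal_plus)
      also have "\<dots> = w + \<delta> * e" using \<delta> e w0 by (simp add: Wdef ennreal_plus[symmetric] del: ennreal_plus)
      finally show ?thesis .
    qed
    have wIe: "enn2real I / e \<le> w / e + \<delta>"
      using wI e by (simp add: field_simps)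
    have b1: "measure P (lower_orthant a) \<le> measure Q (lower_orthant (\<chi> i. a $ i + e)) + enn2real I / e"
      using coupling_bound(1)[OF C e] Ifin unfolding I_def by simp
    have b2: "measure Q (lower_orthant (\<chi> i. a $ i - e)) \<le> measure P (lower_orthant a) + enn2real I / e"
      using coupling_bound(2)[OF C e] Ifin unfolding I_def by simp
    have i1: "measure Q (lower_orthant (\<chi> i. a $ i + e)) \<le> measure Q (lower_orthant a) + K * e"
      using incr[of e a] e by simp
    have "(\<chi> i. (\<chi> j. a $ j - e) $ i + e) = a" by (simp add: vec_eq_iff)
    then have i2: "measure Q (lower_orthant a) \<le> measure Q (lower_orthant (\<chi> i. a $ i - e)) + K * e"
      using incr[of e "\<chi> j. a $ j - e"] e by simp
    show "\<bar>measure P (lower_orthant a) - measure Q (lower_orthant a)\<bar> \<le> K * e + w / e + \<delta>"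
      using b1 b2 i1 i2 wIe by (simp add: abs_le_iff) 
  qed
  have kd: "kolmogorov_dist P Q \<le> K * e + w / e" if e: "0 < e" for e
    unfolding kolmogorov_dist_def by (rule cSUP_least) (use main[OF e] in auto)
  have sqL: "L powr (1/4) = sqrt (sqrt L)"
  proof -
    have "sqrt (sqrt L) = (L powr (1/2)) powr (1/2)" using Lpos by (simp add: powr_half_sqrt)
    also have "\<dots> = L powr (1/4)" by (simp add: powr_powr)
    finally show ?thesis by simp
  qed
  have sK: "sqrt K = 3/2 * sqrt (sqrt L)"
    unfolding K_def by (simp add: real_sqrt_mult real_sqrt_divide)
  have goal: "kolmogorov_dist P Q \<le> 2 * sqrt K * sqrt w"
  proof (cases "w = 0")
    case True
    have "kolmogorov_dist P Q \<le> 0"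
    proof (rule field_le_epsilon)
      fix \<delta> :: real assume "0 < \<delta>"
      then have "kolmogorov_dist P Q \<le> K * (\<delta> / K) + w / (\<delta> / K)" using kd[of "\<delta> / K"] Kpos by simp
      then show "kolmogorov_dist P Q \<le> 0 + \<delta>" using True Kpos by simp
    qed
    then show ?thesis using True by simp
  next
    case False
    then have wpos: "0 < w" using w0 by simp
    define e where "e = sqrt w / sqrt K"
    have epos: "0 < e" using wpos Kpos by (simp add: e_def)
    have K2: "K = sqrt K * sqrt K" using Kpos by simp
    have w2: "w = sqrt w * sqrt w" using w0 by simp
    have "K * e = sqrt K * sqrt w"
      unfolding e_def using Kpos by (subst K2) (simp add: field_simps)
    moreover have "w / e = sqrt K * sqrt w"
      unfolding e_def using Kpos wpos by (subst w2) (simp add: field_simps)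
    ultimately show ?thesis using kd[OF epos] by simp
  qed
  then show ?thesis
    unfolding P_def[symmetric] Q_def[symmetric] W_def[symmetric] w_def[symmetric] L_def[symmetric]
    by (simp add: sK sqL)
qed

end
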